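(* Let $i$ be an agent and let $\prec$ be either $\prec_i$ or $\prec_i^{\mathsf{real}}$. Then for all $\varphi,\psi,\varphi_1,\varphi_2,\varphi_3\in\mathcal{L}$: (1) $\models\neg(\varphi\prec\varphi)$; (2) $\models(\psi\prec\varphi)\to\neg(\varphi\prec\psi)$; (3) $\models((\varphi_1\prec\varphi_2)\wedge(\varphi_2\prec\varphi_3))\to(\varphi_1\prec\varphi_3)$. Here $\psi\prec_i\varphi:=(\mathsf{M}_i\varphi\wedge\neg\mathsf{M}_i\psi)\vee(\mathsf{D}_i\psi\wedge\neg\mathsf{D}_i\varphi)$ and $\psi\prec_i^{\mathsf{real}}\varphi:=(\mathsf{M}^{\mathsf{real}}_i\varphi\wedge\neg\mathsf{M}^{\mathsf{real}}_i\psi)\vee(\mathsf{D}^{\mathsf{real}}_i\psi\wedge\neg\mathsf{D}^{\mathsf{real}}_i\varphi)$, with $\mathsf{M}_i\varphi:=\mathcal{A}_i\varphi\wedge\neg\mathcal{R}_i\varphi$, $\mathsf{D}_i\varphi:=\mathcal{R}_i\varphi\wedge\neg\mathcal{A}_i\varphi$, $\mathsf{M}^{\mathsf{real}}_i\varphi:=\mathcal{A}^{\mathsf{real}}_i\varphi\wedge\neg\mathcal{R}^{\mathsf{real}}_i\varphi$, $\mathsf{D}^{\mathsf{real}}_i\varphi:=\mathcal{R}^{\mathsf{real}}_i\varphi\wedge\neg\mathcal{A}^{\mathsf{real}}_i\varphi$.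
   Context: Let $\mathit{Agt}=\{1,\dots,n\}$ and $\mathit{Atm}$ a countably infinite set of atoms containing special atoms $\mathsf{rew}_i,\mathsf{pun}_i$ for each $i$. $\mathcal{L}_0$: $\alpha::=p\mid\neg\alpha\mid\alpha\wedge\alpha\mid\triangle_i\alpha$. A state is $S=((B_i)_i,V)$ with $B_i\subseteq\mathcal{L}_0$, $V\subseteq\mathit{Atm}$; $S\models p$ iff $p\in V$, Boolean as usual, $S\models\triangle_i\alpha$ iff $\alpha\in B_i$. $S\mathcal{E}_iS'$ iff $S'\models\alpha$ for all $\alpha\in B_i$; $S\mathcal{A}_iS'$ iff $S'\models\alpha$ for some $\alpha$ with $(\alpha\to\mathsf{rew}_i)\in B_i$; $S\mathcal{R}_iS'$ iff $S'\models\alpha$ for some $\alpha$ with $(\alpha\to\mathsf{pun}_i)\in B_i$. A model is $(S,U)$ with $S\in U$, $U$ a set of states. $\mathcal{L}$: $\varphi::=\alpha\mid\neg\varphi\mid\varphi\wedge\varphi\mid\Box_i\varphi\mid\mathcal{A}_i\varphi\mid\mathcal{R}_i\varphi\mid\mathcal{A}^{\mathsf{real}}_i\varphi\mid\mathcal{R}^{\mathsf{real}}_i\varphi$. Semantics: $(S,U)\models\alpha$ iff $S\models\alpha$; $(S,U)\models\Box_i\varphi$ iff all $S'\in U$ with $S\mathcal{E}_iS'$ satisfy $\varphi$; $(S,U)\models\mathcal{A}_i\varphi$ (resp. $\mathcal{R}_i\varphi$) iff every $S'\in U$ satisfying $\varphi$ has $S\mathcal{A}_iS'$ (resp. $S\mathcal{R}_iS'$);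 $(S,U)\models\mathcal{A}^{\mathsf{real}}_i\varphi$ (resp. $\mathcal{R}^{\mathsf{real}}_i\varphi$) iff every $S'\in U$ satisfying $\varphi$ with $S\mathcal{E}_iS'$ has $S\mathcal{A}_iS'$ (resp. $S\mathcal{R}_iS'$). $\models\varphi$ means true in all models. *)

theory Defs
  imports Main
begin

datatype 'ag atm = Rew 'ag | Pun 'ag | Prop nat

datatype 'ag fm0 =
    Atom0 "'ag atm"
  | Neg0 "'ag fm0"
  | And0 "'ag fm0" "'ag fm0"
  | Bel0 'ag "'ag fm0"

definition Imp0 :: "'ag fm0 \<Rightarrow> 'ag fm0 \<Rightarrow> 'ag fm0" where
  "Imp0 a b = Neg0 (And0 a (Neg0 b))"

type_synonym 'ag state = "('ag \<Rightarrow> 'ag fm0 set) \<times> 'ag atm set"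

fun sat0 :: "'ag state \<Rightarrow> 'ag fm0 \<Rightarrow> bool" where
  "sat0 S (Atom0 p) = (p \<in> snd S)"
| "sat0 S (Neg0 a) = (\<not> sat0 S a)"
| "sat0 S (And0 a b) = (sat0 S a \<and> sat0 S b)"
| "sat0 S (Bel0 i a) = (a \<in> fst S i)"

definition relE :: "'ag \<Rightarrow> 'ag state \<Rightarrow> 'ag state \<Rightarrow> bool" where
  "relE i S S' = (\<forall>a \<in> fst S i. sat0 S' a)"

definition relA :: "'ag \<Rightarrow> 'ag state \<Rightarrow> 'ag state \<Rightarrow> bool" where
  "relA i S S' = (\<exists>a. Imp0 a (Atom0 (Rew i)) \<in> fst S i \<and> sat0 S' a)"

definition relR :: "'ag \<Rightarrow> 'ag state \<Rightarrow> 'ag state \<Rightarrow> bool" where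
  "relR i S S' = (\<exists>a. Imp0 a (Atom0 (Pun i)) \<in> fst S i \<and> sat0 S' a)"

datatype 'ag fm =
    Base "'ag fm0"
  | Neg "'ag fm"
  | And "'ag fm" "'ag fm"
  | Box 'ag "'ag fm"
  | Att 'ag "'ag fm"
  | Rep 'ag "'ag fm"
  | AttReal 'ag "'ag fm"
  | RepReal 'ag "'ag fm"

fun sat :: "'ag state \<Rightarrow> 'ag state set \<Rightarrow> 'ag fm \<Rightarrow> bool" where
  "sat S U (Base a) = sat0 S a"
| "sat S U (Neg f) = (\<not> sat S U f)"
| "sat S U (And f g) = (sat S U f \<and> sat S U g)"
| "sat S U (Box i f) = (\<forall>S' \<in> U. relE i S S' \<longrightarrow> sat S' U f)"
| "sat S U (Att i f) = (\<forall>S' \<in> U. sat S' U f \<longrightarrow> relA i S S')"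
| "sat S U (Rep i f) = (\<forall>S' \<in> U. sat S' U f \<longrightarrow> relR i S S')"
| "sat S U (AttReal i f) = (\<forall>S' \<in> U. sat S' U f \<and> relE i S S' \<longrightarrow> relA i S S')"
| "sat S U (RepReal i f) = (\<forall>S' \<in> U. sat S' U f \<and> relE i S S' \<longrightarrow> relR i S S')"

definition valid :: "'ag fm \<Rightarrow> bool" where
  "valid f = (\<forall>S U. S \<in> U \<longrightarrow> sat S U f)"

definition Or :: "'ag fm \<Rightarrow> 'ag fm \<Rightarrow> 'ag fm" where
  "Or f g = Neg (And (Neg f) (Neg g))"

definition Imp :: "'ag fm \<Rightarrow> 'ag fm \<Rightarrow> 'ag fm" where
  "Imp f g = Neg (And f (Neg g))"

definition M :: "'ag \<Rightarrow> 'ag fm \<Rightarrow> 'ag fm" where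
  "M i f = And (Att i f) (Neg (Rep i f))"
definition D :: "'ag \<Rightarrow> 'ag fm \<Rightarrow> 'ag fm" where
  "D i f = And (Rep i f) (Neg (Att i f))"
definition MReal :: "'ag \<Rightarrow> 'ag fm \<Rightarrow> 'ag fm" where
  "MReal i f = And (AttReal i f) (Neg (RepReal i f))"
definition DReal :: "'ag \<Rightarrow> 'ag fm \<Rightarrow> 'ag fm" where
  "DReal i f = And (RepReal i f) (Neg (AttReal i f))"

text \<open>Prec i psi phi  stands for  psi \<prec>_i phi.\<close>
definition Prec :: "'ag \<Rightarrow> 'ag fm \<Rightarrow> 'ag fm \<Rightarrow> 'ag fm" where
  "Prec i psi phi = Or (And (M i phi) (Neg (M i psi))) (And (D i psi) (Neg (D i phi)))"
definition PrecReal :: "'ag \<Rightarrow> 'ag fm \<Rightarrow> 'ag fm \<Rightarrow> 'ag fm" where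
  "PrecReal i psi phi = Or (And (MReal i phi) (Neg (MReal i psi))) (And (DReal i psi) (Neg (DReal i phi)))"

end

theory Submission
  imports Defs
begin

lemma MD_disj: "\<not> (sat S U (M i f) \<and> sat S U (D i f))"
  unfolding M_def D_def by (simp only: sat.simps(2,3)) blast

lemma MDR_disj: "\<not> (sat S U (MReal i f) \<and> sat S U (DReal i f))"
  unfolding MReal_def DReal_def by (simp only: sat.simps(2,3)) blast

lemma Prec_sat: "sat S U (Prec i p q) = ((sat S U (M i q) \<and> \<not> sat S U (M i p)) \<or> (sat S U (D i p) \<and> \<not> sat S U (D i q)))"
  unfolding Prec_def Or_def by (simp only: sat.simps) blast

lemma PrecR_sat: "sat S U (PrecReal i p q) = ((sat S U (MReal i q) \<and> \<not> sat S U (MReal i p)) \<or> (sat S U (DReal i p) \<and> \<not> sat S U (DReal i q)))"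
  unfolding PrecReal_def Or_def by (simp only: sat.simps) blast

theorem proposition2:
  fixes i :: "'ag::finite"
  assumes "prec = Prec i \<or> prec = PrecReal i"
  shows "(\<forall>\<phi>. valid (Neg (prec \<phi> \<phi>)))
       \<and> (\<forall>\<phi> \<psi>. valid (Imp (prec \<psi> \<phi>) (Neg (prec \<phi> \<psi>))))
       \<and> (\<forall>\<phi>1 \<phi>2 \<phi>3. valid (Imp (And (prec \<phi>1 \<phi>2) (prec \<phi>2 \<phi>3)) (prec \<phi>1 \<phi>3)))"
  using assms
proof
  assume p: "prec = Prec i"
  show ?thesis unfolding p valid_def Imp_def
    apply (simp only: sat.simps Prec_sat)
    using MD_disj by meson
next
  assume p: "prec = PrecReal i"
  show ?thesis unfolding p valid_def Imp_def
    apply (simp only: sat.simps PrecR_sat)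
    using MDR_disj by meson
qed

end
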